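(* Let $K\ge 2$ and let $\mathbf{z}_r$ and $\mathrm{OPT}\text{-}\mathbf{Q}^\star$ be as in the context. Let $\lambda_j^\star$ be the $j$-th eigenvalue of $\mathbf{Q}^\star$, with $\lambda_j^\star=0$ if $j>r^\star$. If $r\le r^\star$ and $\mathbf{H}$ is Hermitian, then $$\left|\mathrm{OPT}\text{-}\mathbf{Q}^\star-\mathbf{z}_r^\dagger\mathbf{Q}^\star\mathbf{z}_r\right|\le O\!\left(n\left(\lambda_{r+1}^\star+\|\mathbf{H}\|_2\right)\right).$$
   Context: $\mathcal{A}_K=\{\exp(2\pi\mathrm{i}k/K):k=0,\dots,K-1\}$. $\mathbf{Q}^\star\in\mathbb{C}^{n\times n}$ is Hermitian positive semi-definite of rank $r^\star$ with eigenvalues $\lambda_1^\star\ge\lambda_2^\star\ge\dots$. $\mathbf{H}\in\mathbb{C}^{n\times n}$ and $\mathbf{Q}=\mathbf{Q}^\star+\mathbf{H}$. $\mathbf{Q}_r=\mathbf{V}_r\boldsymbol{\Sigma}_r\mathbf{V}_r^\dagger$ with $\boldsymbol{\Sigma}_r$ the top-$r$ singular values of $\mathbf{Q}$ and $\mathbf{V}_r$ the corresponding left singular vectors. $\mathrm{OPT}\text{-}\mathbf{Q}^\star=\max_{\mathbf{z}\in\mathcal{A}_K^n}\mathbf{z}^\dagger\mathbf{Q}^\star\mathbf{z}$ and $\mathbf{z}_r$ attains $\max_{\mathbf{z}\in\mathcal{A}_K^n}\mathbf{z}^\dagger\mathbf{Q}_r\mathbf{z}$. $\|\cdot\|_2$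 is the spectral norm; $O(\cdot)$ hides an absolute constant. *)

theory Defs
  imports "HOL-Analysis.Analysis"
begin

text \<open>n x n complex matrices are represented as functions nat => nat => complex,
  only the entries with indices below n being relevant; vectors likewise as nat => complex.\<close>

definition roots_of_unity :: "nat \<Rightarrow> complex set" where
  "roots_of_unity K = {exp (2 * of_real pi * \<i> * of_nat k / of_nat K) | k. k < K}"

definition feasible :: "nat \<Rightarrow> nat \<Rightarrow> (nat \<Rightarrow> complex) set" where
  "feasible n K = {z. (\<forall>i<n. z i \<in> roots_of_unity K) \<and> (\<forall>i\<ge>n. z i = 0)}"

definition quad :: "nat \<Rightarrow> (nat \<Rightarrow> nat \<Rightarrow> complex) \<Rightarrow> (nat \<Rightarrow> complex) \<Rightarrow> complex" where
  "quad n A z = (\<Sum>i<n. \<Sum>j<n. cnj (z i) * A i j * z j)"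

definition hermitian :: "nat \<Rightarrow> (nat \<Rightarrow> nat \<Rightarrow> complex) \<Rightarrow> bool" where
  "hermitian n A \<longleftrightarrow> (\<forall>i<n. \<forall>j<n. A i j = cnj (A j i))"

definition psd :: "nat \<Rightarrow> (nat \<Rightarrow> nat \<Rightarrow> complex) \<Rightarrow> bool" where
  "psd n A \<longleftrightarrow> hermitian n A \<and> (\<forall>z. Im (quad n A z) = 0 \<and> Re (quad n A z) \<ge> 0)"

definition unitary_mat :: "nat \<Rightarrow> (nat \<Rightarrow> nat \<Rightarrow> complex) \<Rightarrow> bool" where
  "unitary_mat n U \<longleftrightarrow> (\<forall>i<n. \<forall>j<n. (\<Sum>k<n. cnj (U k i) * U k j) = (if i = j then 1 else 0))"

definition factorization :: "nat \<Rightarrow> (nat \<Rightarrow> nat \<Rightarrow> complex) \<Rightarrow> (nat \<Rightarrow> nat \<Rightarrow> complex)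
    \<Rightarrow> (nat \<Rightarrow> real) \<Rightarrow> (nat \<Rightarrow> nat \<Rightarrow> complex) \<Rightarrow> bool" where
  "factorization n A U d W \<longleftrightarrow>
     (\<forall>i<n. \<forall>j<n. A i j = (\<Sum>k<n. U i k * of_real (d k) * cnj (W j k)))"

definition vnorm :: "nat \<Rightarrow> (nat \<Rightarrow> complex) \<Rightarrow> real" where
  "vnorm n x = sqrt (\<Sum>i<n. (cmod (x i))\<^sup>2)"

definition mulv :: "nat \<Rightarrow> (nat \<Rightarrow> nat \<Rightarrow> complex) \<Rightarrow> (nat \<Rightarrow> complex) \<Rightarrow> (nat \<Rightarrow> complex)" where
  "mulv n A x = (\<lambda>i. \<Sum>j<n. A i j * x j)"

definition spec_norm :: "nat \<Rightarrow> (nat \<Rightarrow> nat \<Rightarrow> complex) \<Rightarrow> real" where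
  "spec_norm n A = Sup {vnorm n (mulv n A x) | x. vnorm n x \<le> 1}"

definition trunc :: "nat \<Rightarrow> (nat \<Rightarrow> nat \<Rightarrow> complex) \<Rightarrow> (nat \<Rightarrow> real) \<Rightarrow> (nat \<Rightarrow> nat \<Rightarrow> complex)" where
  "trunc r V sv = (\<lambda>i j. \<Sum>k<r. V i k * of_real (sv k) * cnj (V j k))"

definition OPT :: "nat \<Rightarrow> nat \<Rightarrow> (nat \<Rightarrow> nat \<Rightarrow> complex) \<Rightarrow> real" where
  "OPT n K A = Max {Re (quad n A z) | z. z \<in> feasible n K}"

end

theory Submission imports Defs begin

definition ip :: "nat \<Rightarrow> (nat\<Rightarrow>complex) \<Rightarrow> (nat\<Rightarrow>complex) \<Rightarrow> complex" where
  "ip n x y = (\<Sum>i<n. cnj (x i) * y i)"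

definition lc :: "nat set \<Rightarrow> (nat \<Rightarrow> complex) \<Rightarrow> (nat \<Rightarrow> nat \<Rightarrow> complex) \<Rightarrow> (nat \<Rightarrow> complex)" where
  "lc I c M = (\<lambda>i. \<Sum>k\<in>I. c k * M i k)"

definition col :: "(nat \<Rightarrow> nat \<Rightarrow> complex) \<Rightarrow> nat \<Rightarrow> (nat \<Rightarrow> complex)" where
  "col M k = (\<lambda>i. M i k)"

lemma cnj_mult_self: "cnj z * z = complex_of_real ((cmod z)\<^sup>2)"
  by (metis complex_norm_square mult.commute)

lemma sum_sq_nonneg: "0 \<le> (\<Sum>i\<in>A. (f i)\<^sup>2::real)"
  by (intro sum_nonneg) auto

lemma ip_cong: "(\<And>i. i<n \<Longrightarrow> x i = x' i) \<Longrightarrow> (\<And>i. i<n \<Longrightarrow> y i = y' i) \<Longrightarrow> ip n x y = ip n x' y'"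
  unfolding ip_def by (intro sum.cong) auto

lemma vnorm_cong: "(\<And>i. i<n \<Longrightarrow> x i = x' i) \<Longrightarrow> vnorm n x = vnorm n x'"
  unfolding vnorm_def by (intro arg_cong[where f=sqrt] sum.cong) auto

lemma ip_conj: "ip n y x = cnj (ip n x y)"
  unfolding ip_def by (simp add: mult.commute)

lemma ip_lc_right: "finite I \<Longrightarrow> ip n x (lc I c M) = (\<Sum>k\<in>I. c k * ip n x (col M k))"
  unfolding ip_def lc_def col_def
  by (simp add: sum_distrib_left sum_distrib_right mult_ac sum.swap[of _ I])

lemma ip_lc_left: "finite I \<Longrightarrow> ip n (lc I c M) x = (\<Sum>k\<in>I. cnj (c k) * ip n (col M k) x)"
  by (subst ip_conj, subst ip_lc_right) (auto simp: ip_conj[of n x])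

lemma ip_orth: "unitary_mat n M \<Longrightarrow> k<n \<Longrightarrow> l<n \<Longrightarrow> ip n (col M k) (col M l) = (if k=l then 1 else 0)"
  unfolding unitary_mat_def ip_def col_def by auto

lemma ip_col_lc: assumes "unitary_mat n M" "I \<subseteq> {..<n}" "k<n"
  shows "ip n (col M k) (lc I c M) = (if k\<in>I then c k else 0)"
proof -
  have fin: "finite I" using assms(2) finite_subset by blast
  have "ip n (col M k) (lc I c M) = (\<Sum>l\<in>I. c l * (if k=l then 1 else 0))"
    using assms fin by (auto simp: ip_lc_right ip_orth intro!: sum.cong)
  also have "\<dots> = (if k\<in>I then c k else 0)"
    using fin by (simp add: if_distrib sum.delta cong: if_cong)
  finally show ?thesis .
qed

lemma ip_lc_lc: assumes "unitary_mat n M" "I \<subseteq> {..<n}"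
  shows "ip n (lc I c M) (lc I d M) = (\<Sum>k\<in>I. cnj (c k) * d k)"
proof -
  have fin: "finite I" using assms(2) finite_subset by blast
  have "\<And>k. k\<in>I \<Longrightarrow> ip n (col M k) (lc I d M) = d k" using assms fin ip_col_lc[OF assms(1,2)] by (metis lessThan_iff subsetD)
  thus ?thesis using fin by (simp add: ip_lc_left)
qed

lemma ip_self: "ip n x x = of_real ((vnorm n x)\<^sup>2)"
proof -
  have "ip n x x = (\<Sum>i<n. of_real ((cmod (x i))\<^sup>2))"
    unfolding ip_def by (intro sum.cong) (auto simp: cnj_mult_self simp del: of_real_power)
  moreover have "0 \<le> (\<Sum>i<n. (cmod (x i))\<^sup>2)" by (intro sum_nonneg) auto
  ultimately show ?thesis unfolding vnorm_def by (simp del: of_real_power)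
qed

lemma vnorm_sq: "(vnorm n x)\<^sup>2 = (\<Sum>i<n. (cmod (x i))\<^sup>2)"
proof -
  have "0 \<le> (\<Sum>i<n. (cmod (x i))\<^sup>2)" by (intro sum_nonneg) auto
  thus ?thesis unfolding vnorm_def by simp
qed

lemma vnorm_nonneg: "vnorm n x \<ge> 0"
proof -
  have "0 \<le> (\<Sum>i<n. (cmod (x i))\<^sup>2)" by (intro sum_nonneg) auto
  thus ?thesis unfolding vnorm_def by simp
qed

lemma vnorm_L2: "vnorm n x = L2_set (\<lambda>i. cmod (x i)) {..<n}"
  unfolding vnorm_def L2_set_def by simp

lemma cauchy_schwarz: "cmod (ip n x y) \<le> vnorm n x * vnorm n y"
proof -
  have "cmod (ip n x y) \<le> (\<Sum>i<n. cmod (x i) * cmod (y i))"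
    unfolding ip_def by (rule order_trans[OF norm_sum]) (simp add: norm_mult)
  also have "\<dots> \<le> vnorm n x * vnorm n y"
    using L2_set_mult_ineq[of "\<lambda>i. cmod (x i)" "\<lambda>i. cmod (y i)" "{..<n}"]
    by (simp add: vnorm_L2)
  finally show ?thesis .
qed

lemma vnorm_lc: assumes "unitary_mat n M" "I \<subseteq> {..<n}"
  shows "(vnorm n (lc I c M))\<^sup>2 = (\<Sum>k\<in>I. (cmod (c k))\<^sup>2)"
proof -
  have "of_real ((vnorm n (lc I c M))\<^sup>2) = (\<Sum>k\<in>I. cnj (c k) * c k)"
    using ip_lc_lc[OF assms, of c c] ip_self by simp
  also have "\<dots> = of_real (\<Sum>k\<in>I. (cmod (c k))\<^sup>2)"
    by (simp add: cnj_mult_self del: of_real_power)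
  finally show ?thesis using of_real_eq_iff by blast
qed

lemma ip_diff_expand: "ip n (\<lambda>i. x i - y i) (\<lambda>i. x i - y i) = ip n x x - ip n x y - ip n y x + ip n y y"
proof -
  have "ip n (\<lambda>i. x i - y i) (\<lambda>i. x i - y i) = (\<Sum>i<n. cnj (x i) * x i - cnj (x i) * y i - cnj (y i) * x i + cnj (y i) * y i)"
    unfolding ip_def by (intro sum.cong) (auto simp: algebra_simps)
  also have "\<dots> = ip n x x - ip n x y - ip n y x + ip n y y"
    unfolding ip_def by (simp only: sum.distrib sum_subtractf)
  finally show ?thesis .
qed

lemma bessel: assumes "unitary_mat n M" "I \<subseteq> {..<n}"
  shows "(\<Sum>k\<in>I. (cmod (ip n (col M k) z))\<^sup>2) \<le> (vnorm n z)\<^sup>2"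
proof -
  define a where "a k = ip n (col M k) z" for k
  define y where "y = lc I a M"
  define S where "S = (\<Sum>k\<in>I. (cmod (a k))\<^sup>2)"
  have fin: "finite I" using assms(2) finite_subset by blast
  have yz: "ip n y z = of_real S"
    unfolding y_def S_def using fin by (simp add: ip_lc_left a_def[symmetric] cnj_mult_self del: of_real_power)
  have zy: "ip n z y = of_real S" using yz ip_conj[of n z y] by simp
  have yy: "ip n y y = of_real S"
    unfolding y_def S_def using ip_lc_lc[OF assms, of a a] by (simp add: cnj_mult_self del: of_real_power)
  have "of_real ((vnorm n (\<lambda>i. z i - y i))\<^sup>2) = of_real ((vnorm n z)\<^sup>2) - (of_real S :: complex)"
    using ip_diff_expand[of n z y] yz zy yy by (simp add: ip_self del: of_real_power)
  hence "(vnorm n (\<lambda>i. z i - y i))\<^sup>2 = (vnorm n z)\<^sup>2 - S"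
    by (metis of_real_diff of_real_eq_iff)
  hence "S \<le> (vnorm n z)\<^sup>2" by (metis diff_ge_0_iff_ge zero_le_power2)
  thus ?thesis unfolding S_def a_def .
qed

lemma mulv_fact: assumes "\<And>i j. i<n \<Longrightarrow> j<n \<Longrightarrow> A i j = (\<Sum>k\<in>I. P i k * complex_of_real (d k) * cnj (R j k))"
    "finite I" "i<n"
  shows "mulv n A z i = lc I (\<lambda>k. of_real (d k) * ip n (col R k) z) P i"
proof -
  have "mulv n A z i = (\<Sum>j<n. (\<Sum>k\<in>I. P i k * complex_of_real (d k) * cnj (R j k)) * z j)"
    unfolding mulv_def using assms by (intro sum.cong) auto
  also have "\<dots> = lc I (\<lambda>k. of_real (d k) * ip n (col R k) z) P i"
    unfolding lc_def ip_def col_def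
    by (simp add: sum_distrib_left sum_distrib_right mult_ac sum.swap[of _ I])
  finally show ?thesis .
qed

lemma quad_ip: "quad n A z = ip n z (mulv n A z)"
  unfolding quad_def ip_def mulv_def by (simp add: sum_distrib_left mult.assoc)

lemma herm_swap: assumes "hermitian n A" "factorization n A V d W"
  shows "factorization n A W d V"
  unfolding factorization_def
proof (intro allI impI)
  fix i j assume ij: "i<n" "j<n"
  have "A i j = cnj (A j i)" using assms(1) ij unfolding hermitian_def by blast
  also have "\<dots> = cnj (\<Sum>k<n. V j k * of_real (d k) * cnj (W i k))"
    using assms(2) ij unfolding factorization_def by simp
  also have "\<dots> = (\<Sum>k<n. W i k * of_real (d k) * cnj (V j k))"
    by (simp add: mult_ac)
  finally show "A i j = (\<Sum>k<n. W i k * of_real (d k) * cnj (V j k))" .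
qed


lemma vnorm_scale: "vnorm n (\<lambda>i. c * x i) = cmod c * vnorm n x"
  unfolding vnorm_L2 by (simp add: norm_mult L2_set_right_distrib)

lemma mulv_scale: "mulv n H (\<lambda>i. c * x i) = (\<lambda>i. c * mulv n H x i)"
  unfolding mulv_def by (simp add: sum_distrib_left mult_ac)

lemma spec_bdd: "bdd_above {vnorm n (mulv n H x) | x. vnorm n x \<le> 1}"
proof (rule bdd_aboveI)
  fix y assume "y \<in> {vnorm n (mulv n H x) | x. vnorm n x \<le> 1}"
  then obtain x where x: "vnorm n x \<le> 1" "y = vnorm n (mulv n H x)" by blast
  have xj: "cmod (x j) \<le> 1" if "j<n" for j
    using member_le_L2_set[of "{..<n}" j "\<lambda>i. cmod (x i)"] that x(1) by (simp add: vnorm_L2)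
  have "y \<le> (\<Sum>i<n. cmod (mulv n H x i))"
    unfolding x(2) vnorm_L2 by (rule L2_set_le_sum) simp
  also have "\<dots> \<le> (\<Sum>i<n. \<Sum>j<n. cmod (H i j))"
  proof (rule sum_mono)
    fix i assume "i \<in> {..<n}"
    have "cmod (mulv n H x i) \<le> (\<Sum>j<n. cmod (H i j * x j))"
      unfolding mulv_def by (rule norm_sum)
    also have "\<dots> \<le> (\<Sum>j<n. cmod (H i j))"
      by (rule sum_mono) (auto simp: norm_mult intro: mult_left_le[OF xj])
    finally show "cmod (mulv n H x i) \<le> (\<Sum>j<n. cmod (H i j))" .
  qed
  finally show "y \<le> (\<Sum>i<n. \<Sum>j<n. cmod (H i j))" .
qed

lemma spec_nonneg: "0 \<le> spec_norm n H"
proof -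
  have "vnorm n (mulv n H (\<lambda>i. 0)) \<in> {vnorm n (mulv n H x) | x. vnorm n x \<le> 1}"
    by (auto simp: vnorm_def)
  hence "vnorm n (mulv n H (\<lambda>i. 0)) \<le> spec_norm n H"
    unfolding spec_norm_def using spec_bdd by (rule cSup_upper)
  thus ?thesis using vnorm_nonneg order_trans by blast
qed

lemma spec_le: "vnorm n (mulv n H x) \<le> spec_norm n H * vnorm n x"
proof (cases "vnorm n x = 0")
  case True
  hence "\<forall>i<n. x i = 0" unfolding vnorm_L2 by (simp add: L2_set_eq_0_iff)
  hence "vnorm n (mulv n H x) = 0" unfolding vnorm_def mulv_def by simp
  thus ?thesis using True by simp
next
  case False
  define t where "t = vnorm n x"
  have tpos: "t > 0" using False vnorm_nonneg t_def by (metis order_less_le)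
  define x' where "x' = (\<lambda>i. complex_of_real (1/t) * x i)"
  have "vnorm n x' = 1" unfolding x'_def vnorm_scale using tpos t_def by (simp add: norm_divide)
  hence "vnorm n (mulv n H x') \<le> spec_norm n H"
    unfolding spec_norm_def using spec_bdd by (intro cSup_upper) auto
  moreover have "vnorm n (mulv n H x') = vnorm n (mulv n H x) / t"
    unfolding x'_def mulv_scale vnorm_scale using tpos by (simp add: norm_divide)
  ultimately have "vnorm n (mulv n H x) / t \<le> spec_norm n H" by simp
  thus ?thesis using tpos t_def by (simp add: divide_le_eq mult.commute)
qed

lemma quad_bound: "cmod (quad n H z) \<le> spec_norm n H * (vnorm n z)\<^sup>2"
proof -
  have "cmod (quad n H z) \<le> vnorm n z * vnorm n (mulv n H z)"
    unfolding quad_ip by (rule cauchy_schwarz)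
  also have "\<dots> \<le> vnorm n z * (spec_norm n H * vnorm n z)"
    by (rule mult_left_mono[OF spec_le vnorm_nonneg])
  finally show ?thesis by (simp add: power2_eq_square mult_ac)
qed


lemma homog_sys:
  "finite S \<Longrightarrow> m < card S \<Longrightarrow>
    \<exists>c. (\<exists>i\<in>S. c i \<noteq> 0) \<and> (\<forall>j<m. (\<Sum>i\<in>S. A j i * c i) = (0::complex))"
proof (induction m arbitrary: S A)
  case 0
  then obtain i where "i \<in> S" by (metis card.empty ex_in_conv less_irrefl)
  thus ?case by (intro exI[of _ "\<lambda>_. 1"]) auto
next
  case (Suc m)
  show ?case
  proof (cases "\<forall>i\<in>S. A m i = 0")
    case True
    obtain c where c: "\<exists>i\<in>S. c i \<noteq> 0" "\<forall>j<m. (\<Sum>i\<in>S. A j i * c i) = 0"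
      using Suc.IH[of S A] Suc.prems by auto
    have "\<forall>j<Suc m. (\<Sum>i\<in>S. A j i * c i) = 0"
      using c(2) True by (auto simp: less_Suc_eq)
    thus ?thesis using c(1) by blast
  next
    case False
    then obtain p where p: "p \<in> S" "A m p \<noteq> 0" by blast
    define S' where "S' = S - {p}"
    define A' where "A' j i = A j i - A j p * A m i / A m p" for j i
    have fS': "finite S'" using Suc.prems S'_def by auto
    have cS': "m < card S'" using Suc.prems p S'_def by (simp add: card_Diff_singleton)
    obtain d where d: "\<exists>i\<in>S'. d i \<noteq> 0" "\<forall>j<m. (\<Sum>i\<in>S'. A' j i * d i) = 0"
      using Suc.IH[OF fS' cS', of A'] by blast
    define c where "c = d(p := - (\<Sum>i\<in>S'. A m i * d i) / A m p)"
    have split: "(\<Sum>i\<in>S. A j i * c i) = A j p * c p + (\<Sum>i\<in>S'. A j i * d i)" for j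
    proof -
      have "(\<Sum>i\<in>S. A j i * c i) = A j p * c p + (\<Sum>i\<in>S'. A j i * c i)"
        using Suc.prems(1) p(1) S'_def by (simp add: sum.remove)
      moreover have "(\<Sum>i\<in>S'. A j i * c i) = (\<Sum>i\<in>S'. A j i * d i)"
        by (intro sum.cong) (auto simp: c_def S'_def)
      ultimately show ?thesis by simp
    qed
    have eqs: "(\<Sum>i\<in>S. A j i * c i) = 0" if "j < Suc m" for j
    proof (cases "j = m")
      case True
      thus ?thesis using split[of m] p(2) by (simp add: c_def)
    next
      case False
      hence jm: "j < m" using that by simp
      have "(\<Sum>i\<in>S'. A' j i * d i) = (\<Sum>i\<in>S'. A j i * d i) - A j p / A m p * (\<Sum>i\<in>S'. A m i * d i)"
        unfolding A'_def by (simp add: sum_subtractf sum_distrib_left algebra_simps)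
      hence "(\<Sum>i\<in>S'. A j i * d i) = A j p / A m p * (\<Sum>i\<in>S'. A m i * d i)"
        using d(2) jm by simp
      thus ?thesis using split[of j] p(2) by (simp add: c_def)
    qed
    have "\<exists>i\<in>S. c i \<noteq> 0" using d(1) S'_def c_def by auto
    thus ?thesis using eqs by blast
  qed
qed


lemma sum_lt_If: "(r::nat) \<le> n \<Longrightarrow> (\<Sum>k<n. if k<r then f k else 0) = (\<Sum>k<r. f k)"
proof -
  assume "r \<le> n"
  hence "{..<n} \<inter> {k. k<r} = {..<r}" by auto
  thus ?thesis by (simp add: sum.If_cases)
qed

lemma vnorm_add: "vnorm n (\<lambda>i. x i + y i) \<le> vnorm n x + vnorm n y"
proof -
  have "vnorm n (\<lambda>i. x i + y i) \<le> L2_set (\<lambda>i. cmod (x i) + cmod (y i)) {..<n}"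
    unfolding vnorm_L2 by (rule L2_set_mono) (auto simp: norm_triangle_ineq)
  also have "\<dots> \<le> vnorm n x + vnorm n y"
    unfolding vnorm_L2 by (rule L2_set_triangle_ineq)
  finally show ?thesis .
qed

lemma mulv_add: "mulv n (\<lambda>i j. A i j + B i j) z i = mulv n A z i + mulv n B z i"
  unfolding mulv_def by (simp add: sum.distrib distrib_right)

lemma mulv_diff: "mulv n A (\<lambda>i. x i - y i) i = mulv n A x i - mulv n A y i"
  unfolding mulv_def by (simp add: sum_subtractf right_diff_distrib)

lemma quad_add: "quad n (\<lambda>i j. A i j + B i j) z = quad n A z + quad n B z"
  unfolding quad_ip ip_def by (simp add: mulv_add sum.distrib distrib_left)

lemma fact_sum: "factorization n A P d R \<Longrightarrow> i<n \<Longrightarrow> j<n \<Longrightarrow>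
   A i j = (\<Sum>k\<in>{..<n}. P i k * complex_of_real (d k) * cnj (R j k))"
  unfolding factorization_def by simp

lemma mulv_fact2: "factorization n A P d R \<Longrightarrow> i<n \<Longrightarrow>
   mulv n A z i = lc {..<n} (\<lambda>k. of_real (d k) * ip n (col R k) z) P i"
  by (rule mulv_fact[OF fact_sum]) auto

lemma ip_col_mulv: assumes "factorization n A P d R" "unitary_mat n P" "k<n"
  shows "ip n (col P k) (mulv n A z) = of_real (d k) * ip n (col R k) z"
proof -
  have "ip n (col P k) (mulv n A z) = ip n (col P k) (lc {..<n} (\<lambda>k. of_real (d k) * ip n (col R k) z) P)"
    by (rule ip_cong) (auto simp: mulv_fact2[OF assms(1)])
  also have "\<dots> = of_real (d k) * ip n (col R k) z"
    using ip_col_lc[OF assms(2), of "{..<n}" k] assms(3) by simp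
  finally show ?thesis .
qed

lemma mulv_col: assumes "factorization n A P d R" "unitary_mat n R" "k<n" "i<n"
  shows "mulv n A (col R k) i = of_real (d k) * P i k"
proof -
  have "mulv n A (col R k) i = lc {..<n} (\<lambda>l. of_real (d l) * ip n (col R l) (col R k)) P i"
    by (rule mulv_fact2[OF assms(1,4)])
  also have "\<dots> = (\<Sum>l<n. (if l = k then of_real (d l) * P i l else 0))"
    unfolding lc_def using assms(2,3) by (intro sum.cong) (auto simp: ip_orth)
  also have "\<dots> = of_real (d k) * P i k" using assms(3) by (simp add: sum.delta)
  finally show ?thesis .
qed

lemma lam_nonneg: assumes "psd n Qs" "unitary_mat n U" "factorization n Qs U lam U" "k<n"
  shows "0 \<le> lam k"
proof -
  have "quad n Qs (col U k) = of_real (lam k) * ip n (col U k) (col U k)"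
    unfolding quad_ip by (rule ip_col_mulv[OF assms(3,2,4)])
  also have "\<dots> = of_real (lam k)" using ip_orth[OF assms(2,4,4)] by simp
  finally show ?thesis using assms(1) unfolding psd_def by (metis Re_complex_of_real)
qed


lemma ip_scale_right: "ip n x (\<lambda>i. c * y i) = c * ip n x y"
  unfolding ip_def by (simp add: sum_distrib_left mult_ac)

lemma herm_sum: "psd n Qs \<Longrightarrow> hermitian n H \<Longrightarrow> hermitian n (\<lambda>i j. Qs i j + H i j)"
  unfolding psd_def hermitian_def by (metis complex_cnj_add)

lemma neg_part:
  assumes psd: "psd n Qs" and hH: "hermitian n H" and uV: "unitary_mat n V" and uW: "unitary_mat n W"
    and fV: "factorization n (\<lambda>i j. Qs i j + H i j) V sv W" and k: "k<n"
    and big: "sv k > spec_norm n H"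
  shows "\<forall>i<n. V i k = W i k"
proof -
  define Q where "Q = (\<lambda>i j. Qs i j + H i j)"
  have fW: "factorization n Q W sv V"
    unfolding Q_def by (rule herm_swap[OF herm_sum[OF psd hH] fV])
  define m where "m = (\<lambda>i. V i k - W i k)"
  have Qm: "mulv n Q m i = - of_real (sv k) * m i" if "i<n" for i
  proof -
    have "mulv n Q m i = mulv n Q (col V k) i - mulv n Q (col W k) i"
      unfolding m_def col_def by (rule mulv_diff)
    also have "\<dots> = of_real (sv k) * W i k - of_real (sv k) * V i k"
      using mulv_col[OF fW uV k that] mulv_col[OF fV[folded Q_def] uW k that] by simp
    finally show ?thesis unfolding m_def by (simp add: algebra_simps)
  qed
  have "quad n Q m = ip n m (\<lambda>i. - of_real (sv k) * m i)"
    unfolding quad_ip by (rule ip_cong) (auto simp: Qm)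
  also have "\<dots> = - of_real (sv k) * of_real ((vnorm n m)\<^sup>2)"
    by (simp only: ip_scale_right ip_self)
  finally have q1: "Re (quad n Q m) = - sv k * (vnorm n m)\<^sup>2" by simp
  have "quad n Q m = quad n Qs m + quad n H m" unfolding Q_def by (rule quad_add)
  moreover have "Re (quad n Qs m) \<ge> 0" using psd unfolding psd_def by blast
  moreover have "Re (quad n H m) \<ge> - (spec_norm n H * (vnorm n m)\<^sup>2)"
    using quad_bound[of n H m] abs_Re_le_cmod[of "quad n H m"] by linarith
  ultimately have "- sv k * (vnorm n m)\<^sup>2 \<ge> - (spec_norm n H * (vnorm n m)\<^sup>2)"
    using q1 by simp
  hence "(sv k - spec_norm n H) * (vnorm n m)\<^sup>2 \<le> 0" by (simp add: algebra_simps)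
  hence "(vnorm n m)\<^sup>2 \<le> 0" using big by (simp add: mult_le_0_iff)
  hence "vnorm n m = 0" by simp
  hence "\<forall>i<n. m i = 0" unfolding vnorm_L2 by (simp add: L2_set_eq_0_iff)
  thus ?thesis unfolding m_def by simp
qed


lemma xy_le: "0 \<le> (x::real) \<Longrightarrow> 0 \<le> y \<Longrightarrow> x * y \<le> x\<^sup>2 + y\<^sup>2"
proof -
  assume "0 \<le> x" "0 \<le> y"
  have "0 \<le> (x - y)\<^sup>2" by simp
  hence "2 * (x * y) \<le> x\<^sup>2 + y\<^sup>2" by (simp add: power2_diff)
  moreover have "0 \<le> x * y" using \<open>0 \<le> x\<close> \<open>0 \<le> y\<close> by simp
  ultimately show ?thesis by linarith
qed

lemma term_bound:
  fixes a b :: complex and sg h s :: real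
  assumes "0 \<le> sg" "0 \<le> h" "0 \<le> s"
    and cases: "(b = a) \<or> (sg \<le> h) "
  shows "cmod (of_real sg * b * cnj a - of_real sg * a * cnj a) \<le> 2 * (h + s) * ((cmod a)\<^sup>2 + (cmod b)\<^sup>2)"
proof (cases "b = a")
  case True thus ?thesis using assms by simp
next
  case False
  hence sh: "sg \<le> h" using cases by simp
  have "cmod (of_real sg * b * cnj a - of_real sg * a * cnj a) = sg * (cmod a * cmod (b - a))"
  proof -
    have "of_real sg * b * cnj a - of_real sg * a * cnj a = of_real sg * cnj a * (b - a)"
      by (simp add: algebra_simps)
    thus ?thesis using assms(1) by (simp add: norm_mult)
  qed
  also have "\<dots> \<le> h * (cmod a * (cmod b + cmod a))"
    using sh assms by (intro mult_mono mult_left_mono) (auto simp: norm_triangle_ineq4)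
  also have "\<dots> = h * (cmod a * cmod b + (cmod a)\<^sup>2)" by (simp add: algebra_simps power2_eq_square)
  also have "\<dots> \<le> h * (2 * ((cmod a)\<^sup>2 + (cmod b)\<^sup>2))"
  proof -
    have "cmod a * cmod b + (cmod a)\<^sup>2 \<le> 2 * ((cmod a)\<^sup>2 + (cmod b)\<^sup>2)"
    proof -
      have "0 \<le> (cmod b)\<^sup>2" by simp
      moreover have "cmod a * cmod b \<le> (cmod a)\<^sup>2 + (cmod b)\<^sup>2" by (rule xy_le) auto
      ultimately show ?thesis by (smt (verit))
    qed
    thus ?thesis using assms(2) by (rule mult_left_mono)
  qed
  also have "\<dots> \<le> 2 * (h + s) * ((cmod a)\<^sup>2 + (cmod b)\<^sup>2)"
    using assms by (simp add: algebra_simps)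
  finally show ?thesis .
qed

lemma term_bound2:
  fixes a b :: complex and sg h s :: real
  assumes "0 \<le> sg" "0 \<le> h" "sg \<le> s"
  shows "cmod (of_real sg * b * cnj a) \<le> 2 * (h + s) * ((cmod a)\<^sup>2 + (cmod b)\<^sup>2)"
proof -
  have "cmod (of_real sg * b * cnj a) = sg * (cmod a * cmod b)"
    using assms(1) by (simp add: norm_mult)
  also have "\<dots> \<le> s * ((cmod a)\<^sup>2 + (cmod b)\<^sup>2)"
    using assms xy_le[of "cmod a" "cmod b"] by (intro mult_mono) auto
  also have "\<dots> \<le> 2 * (h + s) * ((cmod a)\<^sup>2 + (cmod b)\<^sup>2)"
    using assms by (intro mult_right_mono) auto
  finally show ?thesis .
qed


lemma main_bound:
  assumes psd: "psd n Qs" and hH: "hermitian n H" and uV: "unitary_mat n V" and uW: "unitary_mat n W"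
    and fV: "factorization n (\<lambda>i j. Qs i j + H i j) V sv W"
    and svnn: "\<forall>j<n. sv j \<ge> 0" and rn: "r \<le> n"
    and sbound: "\<forall>k. r \<le> k \<longrightarrow> k < n \<longrightarrow> sv k \<le> s" and s0: "0 \<le> s"
  shows "cmod (quad n Qs z - quad n (trunc r V sv) z) \<le> (4 * (spec_norm n H + s) + spec_norm n H) * (vnorm n z)\<^sup>2"
proof -
  define h where "h = spec_norm n H"
  have h0: "0 \<le> h" unfolding h_def by (rule spec_nonneg)
  define Q where "Q = (\<lambda>i j. Qs i j + H i j)"
  define a where "a k = ip n (col V k) z" for k
  define b where "b k = ip n (col W k) z" for k
  have ac: "ip n z (col V k) = cnj (a k)" for k unfolding a_def by (rule ip_conj)
  have qQ: "quad n Q z = (\<Sum>k<n. of_real (sv k) * b k * cnj (a k))"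
  proof -
    have "quad n Q z = ip n z (lc {..<n} (\<lambda>k. of_real (sv k) * b k) V)"
      unfolding quad_ip b_def by (rule ip_cong) (auto simp: mulv_fact2[OF fV[folded Q_def]])
    also have "\<dots> = (\<Sum>k<n. of_real (sv k) * b k * cnj (a k))"
      by (simp add: ip_lc_right ac mult.assoc)
    finally show ?thesis .
  qed
  have qR: "quad n (trunc r V sv) z = (\<Sum>k<r. of_real (sv k) * a k * cnj (a k))"
  proof -
    have "quad n (trunc r V sv) z = ip n z (lc {..<r} (\<lambda>k. of_real (sv k) * a k) V)"
      unfolding quad_ip a_def by (rule ip_cong) (auto intro!: mulv_fact simp: trunc_def)
    also have "\<dots> = (\<Sum>k<r. of_real (sv k) * a k * cnj (a k))"
      by (simp add: ip_lc_right ac mult.assoc)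
    finally show ?thesis .
  qed
  define t where "t k = of_real (sv k) * b k * cnj (a k) - (if k < r then of_real (sv k) * a k * cnj (a k) else 0)" for k
  have diff: "quad n Q z - quad n (trunc r V sv) z = (\<Sum>k<n. t k)"
    unfolding qQ qR t_def sum_subtractf
    using sum_lt_If[OF rn, of "\<lambda>k. of_real (sv k) * a k * cnj (a k)"] by simp
  have tb: "cmod (t k) \<le> 2 * (h + s) * ((cmod (a k))\<^sup>2 + (cmod (b k))\<^sup>2)" if k: "k<n" for k
  proof (cases "k < r")
    case True
    have "b k = a k \<or> sv k \<le> h"
    proof (cases "sv k \<le> h")
      case False
      hence "\<forall>i<n. V i k = W i k" using neg_part[OF psd hH uV uW fV k] h_def by simp
      hence "b k = a k" unfolding a_def b_def col_def by (intro ip_cong) auto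
      thus ?thesis by simp
    qed simp
    thus ?thesis unfolding t_def using True term_bound[OF _ h0 s0] svnn k by simp
  next
    case False
    thus ?thesis unfolding t_def using term_bound2[OF _ h0, of "sv k" s] svnn k sbound by simp
  qed
  have "cmod (quad n Q z - quad n (trunc r V sv) z) \<le> (\<Sum>k<n. cmod (t k))"
    unfolding diff by (rule norm_sum)
  also have "\<dots> \<le> (\<Sum>k<n. 2 * (h + s) * ((cmod (a k))\<^sup>2 + (cmod (b k))\<^sup>2))"
    by (rule sum_mono) (use tb in auto)
  also have "\<dots> = 2 * (h + s) * ((\<Sum>k<n. (cmod (a k))\<^sup>2) + (\<Sum>k<n. (cmod (b k))\<^sup>2))"
    by (simp only: sum_distrib_left[symmetric] sum.distrib)
  also have "\<dots> \<le> 2 * (h + s) * ((vnorm n z)\<^sup>2 + (vnorm n z)\<^sup>2)"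
    using bessel[OF uV, of "{..<n}" z] bessel[OF uW, of "{..<n}" z] h0 s0
    unfolding a_def b_def by (intro mult_left_mono add_mono) auto
  finally have b1: "cmod (quad n Q z - quad n (trunc r V sv) z) \<le> 4 * (h + s) * (vnorm n z)\<^sup>2"
    by (simp add: algebra_simps)
  have "quad n Qs z - quad n (trunc r V sv) z = (quad n Q z - quad n (trunc r V sv) z) - quad n H z"
    unfolding Q_def quad_add by simp
  hence "cmod (quad n Qs z - quad n (trunc r V sv) z) \<le> cmod (quad n Q z - quad n (trunc r V sv) z) + cmod (quad n H z)"
    by (metis norm_triangle_ineq4)
  also have "\<dots> \<le> 4 * (h + s) * (vnorm n z)\<^sup>2 + h * (vnorm n z)\<^sup>2"
    using b1 quad_bound[of n H z] h_def by simp
  finally show ?thesis unfolding h_def by (simp add: algebra_simps)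
qed


lemma weyl:
  assumes psd: "psd n Qs" and hH: "hermitian n H" and uU: "unitary_mat n U"
    and fU: "factorization n Qs U lam U"
    and lsort: "\<forall>i j. i \<le> j \<longrightarrow> j < n \<longrightarrow> lam j \<le> lam i"
    and uV: "unitary_mat n V" and uW: "unitary_mat n W"
    and fV: "factorization n (\<lambda>i j. Qs i j + H i j) V sv W"
    and svsort: "\<forall>i j. i \<le> j \<longrightarrow> j < n \<longrightarrow> sv j \<le> sv i" and svnn: "\<forall>j<n. sv j \<ge> 0"
    and rn: "r < n"
  shows "sv r \<le> lam r + spec_norm n H"
proof -
  define Q where "Q = (\<lambda>i j. Qs i j + H i j)"
  have fW: "factorization n Q W sv V"
    unfolding Q_def by (rule herm_swap[OF herm_sum[OF psd hH] fV])
  have lnn: "\<And>k. k<n \<Longrightarrow> 0 \<le> lam k" using lam_nonneg[OF psd uU fU] by blast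
  obtain c where c: "\<exists>i\<in>{..<Suc r}. c i \<noteq> 0"
      "\<forall>j<r. (\<Sum>i\<in>{..<Suc r}. ip n (col U j) (col V i) * c i) = 0"
    using homog_sys[of "{..<Suc r}" r "\<lambda>j i. ip n (col U j) (col V i)"] by auto
  define z where "z = lc {..<Suc r} c V"
  have Ssub: "{..<Suc r} \<subseteq> {..<n}" using rn by auto
  have zU: "ip n (col U j) z = 0" if "j<r" for j
    unfolding z_def using c(2) that by (simp add: ip_lc_right mult.commute)
  have zV: "ip n (col V k) z = (if k < Suc r then c k else 0)" if "k<n" for k
    unfolding z_def using ip_col_lc[OF uV Ssub that] by simp
  have zn: "(vnorm n z)\<^sup>2 = (\<Sum>k<Suc r. (cmod (c k))\<^sup>2)"
    unfolding z_def by (rule vnorm_lc[OF uV Ssub])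
  have zpos: "vnorm n z > 0"
  proof -
    obtain i where i: "i < Suc r" "c i \<noteq> 0" using c(1) by auto
    have "0 < (\<Sum>k<Suc r. (cmod (c k))\<^sup>2)"
      by (rule sum_pos2[of _ i]) (use i in auto)
    thus ?thesis using zn vnorm_nonneg[of n z] by (metis less_eq_real_def power_zero_numeral zero_less_power2)
  qed
  have Qz2: "(vnorm n (mulv n Q z))\<^sup>2 = (\<Sum>k<n. (cmod (of_real (sv k) * ip n (col V k) z))\<^sup>2)"
  proof -
    have "vnorm n (mulv n Q z) = vnorm n (lc {..<n} (\<lambda>k. of_real (sv k) * ip n (col V k) z) W)"
      by (rule vnorm_cong) (simp add: mulv_fact2[OF fW])
    thus ?thesis using vnorm_lc[OF uW, of "{..<n}"] by simp
  qed
  have "(sv r * vnorm n z)\<^sup>2 = (\<Sum>k<n. if k < Suc r then (sv r)\<^sup>2 * (cmod (c k))\<^sup>2 else 0)"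
    using sum_lt_If[of "Suc r" n "\<lambda>k. (sv r)\<^sup>2 * (cmod (c k))\<^sup>2"] rn zn
    by (simp add: power_mult_distrib sum_distrib_left del: sum.lessThan_Suc)
  also have "\<dots> \<le> (\<Sum>k<n. (cmod (of_real (sv k) * ip n (col V k) z))\<^sup>2)"
  proof (rule sum_mono)
    fix k assume k: "k \<in> {..<n}"
    show "(if k < Suc r then (sv r)\<^sup>2 * (cmod (c k))\<^sup>2 else 0) \<le> (cmod (of_real (sv k) * ip n (col V k) z))\<^sup>2"
    proof (cases "k < Suc r")
      case True
      have "sv r \<le> sv k" using svsort rn True by auto
      moreover have "0 \<le> sv r" using svnn rn by auto
      ultimately have "(sv r)\<^sup>2 \<le> (sv k)\<^sup>2" by (rule power_mono)
      thus ?thesis using True zV k by (simp add: norm_mult power_mult_distrib mult_right_mono)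
    qed simp
  qed
  also have "\<dots> = (vnorm n (mulv n Q z))\<^sup>2" using Qz2 by simp
  finally have lowQ: "sv r * vnorm n z \<le> vnorm n (mulv n Q z)"
    by (rule power2_le_imp_le) (rule vnorm_nonneg)
  have "(vnorm n (mulv n Qs z))\<^sup>2 = (\<Sum>k<n. (cmod (of_real (lam k) * ip n (col U k) z))\<^sup>2)"
  proof -
    have "vnorm n (mulv n Qs z) = vnorm n (lc {..<n} (\<lambda>k. of_real (lam k) * ip n (col U k) z) U)"
      by (rule vnorm_cong) (simp add: mulv_fact2[OF fU])
    thus ?thesis using vnorm_lc[OF uU, of "{..<n}"] by simp
  qed
  also have "\<dots> \<le> (\<Sum>k<n. (lam r)\<^sup>2 * (cmod (ip n (col U k) z))\<^sup>2)"
  proof (rule sum_mono)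
    fix k assume k: "k \<in> {..<n}"
    show "(cmod (of_real (lam k) * ip n (col U k) z))\<^sup>2 \<le> (lam r)\<^sup>2 * (cmod (ip n (col U k) z))\<^sup>2"
    proof (cases "k < r")
      case True thus ?thesis using zU by simp
    next
      case False
      hence "lam k \<le> lam r" using lsort k by auto
      moreover have "0 \<le> lam k" using lnn k by auto
      ultimately have "(lam k)\<^sup>2 \<le> (lam r)\<^sup>2" by (rule power_mono)
      moreover have "\<bar>lam k\<bar> = lam k" using lnn k by auto
      ultimately show ?thesis by (simp add: norm_mult power_mult_distrib mult_right_mono)
    qed
  qed
  also have "\<dots> = (lam r)\<^sup>2 * (\<Sum>k<n. (cmod (ip n (col U k) z))\<^sup>2)"
    by (simp add: sum_distrib_left)
  also have "\<dots> \<le> (lam r)\<^sup>2 * (vnorm n z)\<^sup>2"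
    by (rule mult_left_mono[OF bessel[OF uU]]) auto
  also have "\<dots> = (lam r * vnorm n z)\<^sup>2" by (simp add: power_mult_distrib)
  finally have upQs: "vnorm n (mulv n Qs z) \<le> lam r * vnorm n z"
    by (rule power2_le_imp_le) (use lnn rn vnorm_nonneg in auto)
  have "vnorm n (mulv n Q z) = vnorm n (\<lambda>i. mulv n Qs z i + mulv n H z i)"
    unfolding Q_def by (rule vnorm_cong) (rule mulv_add)
  also have "\<dots> \<le> vnorm n (mulv n Qs z) + vnorm n (mulv n H z)" by (rule vnorm_add)
  also have "\<dots> \<le> lam r * vnorm n z + spec_norm n H * vnorm n z"
    using upQs spec_le[of n H z] by simp
  finally have "sv r * vnorm n z \<le> (lam r + spec_norm n H) * vnorm n z"
    using lowQ by (simp add: algebra_simps)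
  thus ?thesis using zpos by simp
qed


lemma roots_norm: "w \<in> roots_of_unity K \<Longrightarrow> cmod w = 1"
  unfolding roots_of_unity_def by auto

lemma feasible_norm: "z \<in> feasible n K \<Longrightarrow> (vnorm n z)\<^sup>2 = real n"
proof -
  assume z: "z \<in> feasible n K"
  have "(vnorm n z)\<^sup>2 = (\<Sum>i<n. (1::real))"
  proof (unfold vnorm_sq, rule sum.cong)
    fix i assume "i \<in> {..<n}"
    hence "z i \<in> roots_of_unity K" using z unfolding feasible_def by blast
    thus "(cmod (z i))\<^sup>2 = 1" using roots_norm by simp
  qed simp
  thus ?thesis by simp
qed


lemma roots_finite: "finite (roots_of_unity K)"
proof -
  have "roots_of_unity K = (\<lambda>k. exp (2 * of_real pi * \<i> * of_nat k / of_nat K)) ` {..<K}"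
    unfolding roots_of_unity_def by blast
  thus ?thesis by simp
qed

lemma feasible_eq: "feasible n K = {f. \<forall>x. (x \<in> {..<n} \<longrightarrow> f x \<in> roots_of_unity K) \<and> (x \<notin> {..<n} \<longrightarrow> f x = 0)}"
  unfolding feasible_def by (intro Collect_cong) (meson lessThan_iff not_le)


lemma feasible_finite: "finite (feasible n K)"
  unfolding feasible_eq by (rule finite_set_of_finite_funs[OF finite_lessThan roots_finite])

lemma feasible_ne: "K \<ge> 1 \<Longrightarrow> (\<lambda>i. if i<n then 1 else 0) \<in> feasible n K"
proof -
  assume "K \<ge> 1"
  hence K0: "(0::nat) < K" by simp
  have "exp (2 * of_real pi * \<i> * of_nat 0 / of_nat K) \<in> roots_of_unity K" unfolding roots_of_unity_def
    using K0 by blast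
  moreover have "exp (2 * of_real pi * \<i> * of_nat 0 / of_nat K) = (1::complex)" by simp
  ultimately have "1 \<in> roots_of_unity K" by simp
  thus ?thesis unfolding feasible_def by auto
qed


lemma OPT_props: assumes "K \<ge> 1"
  shows "\<exists>zs\<in>feasible n K. OPT n K A = Re (quad n A zs)"
    and "z \<in> feasible n K \<Longrightarrow> Re (quad n A z) \<le> OPT n K A"
proof -
  let ?S = "{Re (quad n A z) | z. z \<in> feasible n K}"
  have "?S = (\<lambda>z. Re (quad n A z)) ` feasible n K" by blast
  hence fin: "finite ?S" using feasible_finite by simp
  have ne: "?S \<noteq> {}" using feasible_ne[OF assms] by blast
  show "\<exists>zs\<in>feasible n K. OPT n K A = Re (quad n A zs)"
    using Max_in[OF fin ne] unfolding OPT_def by auto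
  show "z \<in> feasible n K \<Longrightarrow> Re (quad n A z) \<le> OPT n K A"
    unfolding OPT_def using fin by (intro Max_ge) auto
qed

theorem corollary5:
  "\<exists>C::real. \<forall>(n::nat) (K::nat) (Qs::nat\<Rightarrow>nat\<Rightarrow>complex) (H::nat\<Rightarrow>nat\<Rightarrow>complex)
      (lam::nat\<Rightarrow>real) (U::nat\<Rightarrow>nat\<Rightarrow>complex)
      (V::nat\<Rightarrow>nat\<Rightarrow>complex) (W::nat\<Rightarrow>nat\<Rightarrow>complex) (sv::nat\<Rightarrow>real)
      (r::nat) (zr::nat\<Rightarrow>complex).
     K \<ge> 2 \<longrightarrow>
     psd n Qs \<longrightarrow>
     unitary_mat n U \<longrightarrow> factorization n Qs U lam U \<longrightarrow>
     (\<forall>i j. i \<le> j \<longrightarrow> j < n \<longrightarrow> lam j \<le> lam i) \<longrightarrow> (\<forall>j\<ge>n. lam j = 0) \<longrightarrow>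
     hermitian n H \<longrightarrow>
     unitary_mat n V \<longrightarrow> unitary_mat n W \<longrightarrow>
     factorization n (\<lambda>i j. Qs i j + H i j) V sv W \<longrightarrow>
     (\<forall>i j. i \<le> j \<longrightarrow> j < n \<longrightarrow> sv j \<le> sv i) \<longrightarrow> (\<forall>j<n. sv j \<ge> 0) \<longrightarrow>
     1 \<le> r \<longrightarrow> r \<le> card {j. j < n \<and> lam j \<noteq> 0} \<longrightarrow>
     zr \<in> feasible n K \<longrightarrow>
     (\<forall>z\<in>feasible n K. Re (quad n (trunc r V sv) z) \<le> Re (quad n (trunc r V sv) zr)) \<longrightarrow>
     cmod (complex_of_real (OPT n K Qs) - quad n Qs zr)
       \<le> C * real n * (lam r + spec_norm n H)"
proof (intro exI[of _ 20] allI impI)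
  fix n K Qs H lam U V W sv r zr
  assume K2: "K \<ge> (2::nat)" and psd: "psd n Qs" and uU: "unitary_mat n U"
    and fU: "factorization n Qs U lam U"
    and lsort: "\<forall>i j. i \<le> j \<longrightarrow> j < n \<longrightarrow> lam j \<le> lam i" and lz: "\<forall>j\<ge>n. lam j = 0"
    and hH: "hermitian n H" and uV: "unitary_mat n V" and uW: "unitary_mat n W"
    and fV: "factorization n (\<lambda>i j. Qs i j + H i j) V sv W"
    and svsort: "\<forall>i j. i \<le> j \<longrightarrow> j < n \<longrightarrow> sv j \<le> sv i" and svnn: "\<forall>j<n. sv j \<ge> 0"
    and r1: "1 \<le> r" and rcard: "r \<le> card {j. j < n \<and> lam j \<noteq> 0}"
    and zr: "zr \<in> feasible n K"
    and zopt: "\<forall>z\<in>feasible n K. Re (quad n (trunc r V sv) z) \<le> Re (quad n (trunc r V sv) zr)"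
  define h where "h = spec_norm n H"
  have h0: "0 \<le> h" unfolding h_def by (rule spec_nonneg)
  have "card {j. j < n \<and> lam j \<noteq> 0} \<le> card {..<n}" by (intro card_mono) auto
  hence rn: "r \<le> n" using rcard by simp
  define s where "s = (if r < n then sv r else 0)"
  have s0: "0 \<le> s" unfolding s_def using svnn by auto
  have sb: "\<forall>k. r \<le> k \<longrightarrow> k < n \<longrightarrow> sv k \<le> s" unfolding s_def using svsort by auto
  have lr0: "0 \<le> lam r"
    using lam_nonneg[OF psd uU fU, of r] lz by (cases "r < n") auto
  have sw: "s \<le> lam r + h"
  proof (cases "r < n")
    case True thus ?thesis unfolding s_def h_def
      using weyl[OF psd hH uU fU lsort uV uW fV svsort svnn True] by simp
  next
    case False thus ?thesis unfolding s_def using lr0 h0 by simp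
  qed
  define E where "E = (4 * (h + s) + h) * real n"
  have bnd: "\<bar>Re (quad n Qs z) - Re (quad n (trunc r V sv) z)\<bar> \<le> E" if "z \<in> feasible n K" for z
  proof -
    have "\<bar>Re (quad n Qs z) - Re (quad n (trunc r V sv) z)\<bar> \<le> cmod (quad n Qs z - quad n (trunc r V sv) z)"
      using abs_Re_le_cmod[of "quad n Qs z - quad n (trunc r V sv) z"] by simp
    also have "\<dots> \<le> (4 * (h + s) + h) * (vnorm n z)\<^sup>2"
      using main_bound[OF psd hH uV uW fV svnn rn sb s0, of z] h_def by simp
    also have "\<dots> = E" unfolding E_def using feasible_norm[OF that] by simp
    finally show ?thesis .
  qed
  have K1: "K \<ge> 1" using K2 by simp
  obtain zs where zs: "zs \<in> feasible n K" "OPT n K Qs = Re (quad n Qs zs)"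
    using OPT_props(1)[OF K1] by blast
  have le: "Re (quad n Qs zr) \<le> OPT n K Qs" using OPT_props(2)[OF K1 zr] .
  have "OPT n K Qs \<le> Re (quad n (trunc r V sv) zs) + E" using bnd[OF zs(1)] zs(2) by linarith
  also have "\<dots> \<le> Re (quad n (trunc r V sv) zr) + E" using zopt zs(1) by simp
  also have "\<dots> \<le> Re (quad n Qs zr) + 2 * E" using bnd[OF zr] by linarith
  finally have up: "OPT n K Qs - Re (quad n Qs zr) \<le> 2 * E" by simp
  have im: "Im (quad n Qs zr) = 0" using psd unfolding psd_def by blast
  have "cmod (complex_of_real (OPT n K Qs) - quad n Qs zr) = \<bar>OPT n K Qs - Re (quad n Qs zr)\<bar>"
    using im by (simp add: cmod_def)
  also have "\<dots> \<le> 2 * E" using up le by simp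
  also have "\<dots> \<le> 20 * real n * (lam r + h)"
  proof -
    have "2 * (4 * (h + s) + h) \<le> 20 * (lam r + h)" using sw h0 lr0 by simp
    hence "2 * (4 * (h + s) + h) * real n \<le> 20 * (lam r + h) * real n" by (rule mult_right_mono) simp
    thus ?thesis unfolding E_def by (simp only: mult_ac)
  qed
  finally show "cmod (complex_of_real (OPT n K Qs) - quad n Qs zr) \<le> 20 * real n * (lam r + spec_norm n H)"
    unfolding h_def .
qed

end
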